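(* Let $x^t$ and $\underline x_i^t$ be generated by RGEM or by stochastic RGEM (see context), and let $x\in X$. Suppose that for some $\theta_t\ge0$, $t=1,\dots,k$, \[ \theta_t\big(m(1+\tau_t)-1\big)=\theta_{t-1}m(1+\tau_{t-1}),\qquad t=2,\dots,k. \] Then \[ \sum_{t=1}^k\theta_t\mathbb{E}[Q(x^t,x)]\le\theta_k(1+\tau_k)\sum_{i=1}^m\mathbb{E}[f_i(\underline x_i^k)]+\sum_{t=1}^k\theta_t\mathbb{E}[\mu w(x^t)-\psi(x)]-\theta_1\big(m(1+\tau_1)-1\big)\big[\langle x^0-x,\nabla f(x)\rangle+f(x)\big], \] where $Q(\underline x,x):=\langle\nabla f(x),\underline x-x\rangle+\mu w(\underline x)-\mu w(x)$ and the expectation is over all random variables of the algorithm.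
   Context: $X\subseteq\mathbb{R}^n$ closed convex; $f_i:X\to\mathbb{R}$ convex and differentiable, $i=1,\dots,m$; $f=\frac1m\sum_i f_i$; $\mu\ge0$; $w:X\to\mathbb{R}$ strongly convex with modulus 1; $\psi=f+\mu w$. In the stochastic case $f_i(x)=\mathbb{E}[F_i(x,\xi_i)]$ and an oracle returns $G_i(x,\xi)$ with $\mathbb{E}[G_i(x,\xi)]=\nabla f_i(x)$. Prox-function $P(x^0,x):=w(x)-[w(x^0)+\langle w'(x^0),x-x^0\rangle]$, prox-mapping $\mathcal M_X(g,x^0,\eta):=\operatorname{argmin}_{x\in X}\{\langle g,x\rangle+\mu w(x)+\eta P(x^0,x)\}$. RGEM: given $x^0\in X$ and nonnegative $\{\alpha_t\},\{\eta_t\},\{\tau_t\}$, set $\underline x_i^0=x^0$, $y^{-1}=y^0=\mathbf 0\in(\mathbb{R}^n)^m$. For $t=1,\dots,k$: choose $i_t$ uniformly from $\{1,\dots,m\}$ independently; $\tilde y^t=y^{t-1}+\alpha_t(y^{t-1}-y^{t-2})$; $x^t=\mathcal M_X(\tfrac1m\sum_i\tilde y_i^t,x^{t-1},\eta_t)$; $\underline x_i^t=(1+\tau_t)^{-1}(x^t+\tau_t\underline x_i^{t-1})$ if $i=i_t$, else unchanged; $y_i^t=\nabla f_i(\underline x_i^t)$ if $i=i_t$, else $y_i^t=y_i^{t-1}$. Stochastic RGEM: same but for $i=i_t$, $y_i^t=\frac1{B_t}\sum_{j=1}^{B_t}G_i(\underline x_i^t,\xi_{i,j}^t)$ with fresh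 samples. *)

theory Defs
  imports "HOL-Analysis.Analysis" "HOL-Probability.Probability" "HOL-Library.FuncSet"
begin

definition strongly_convex_mod :: "'a::real_normed_vector set \<Rightarrow> ('a \<Rightarrow> real) \<Rightarrow> real \<Rightarrow> bool" where
  "strongly_convex_mod X w c \<longleftrightarrow> convex X \<and>
     (\<forall>x\<in>X. \<forall>y\<in>X. \<forall>u\<in>{0..1}.
        w ((1 - u) *\<^sub>R x + u *\<^sub>R y) \<le> (1 - u) * w x + u * w y - c / 2 * u * (1 - u) * (norm (x - y))\<^sup>2)"

definition prox_fun :: "('a::real_inner \<Rightarrow> real) \<Rightarrow> ('a \<Rightarrow> 'a) \<Rightarrow> 'a \<Rightarrow> 'a \<Rightarrow> real" where
  "prox_fun w w' x0 x = w x - (w x0 + inner (w' x0) (x - x0))"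

definition prox_obj :: "real \<Rightarrow> ('a::real_inner \<Rightarrow> real) \<Rightarrow> ('a \<Rightarrow> 'a) \<Rightarrow> 'a \<Rightarrow> 'a \<Rightarrow> real \<Rightarrow> 'a \<Rightarrow> real" where
  "prox_obj \<mu> w w' g x0 \<eta> x = inner g x + \<mu> * w x + \<eta> * prox_fun w w' x0 x"

text \<open>Prox-mapping M_X(g,x0,eta) := argmin over X of the prox objective
  (a fixed choice of minimizer; unique whenever the objective is strongly convex).\<close>
definition prox_map :: "'a::real_inner set \<Rightarrow> real \<Rightarrow> ('a \<Rightarrow> real) \<Rightarrow> ('a \<Rightarrow> 'a) \<Rightarrow> 'a \<Rightarrow> 'a \<Rightarrow> real \<Rightarrow> 'a" where
  "prox_map X \<mu> w w' g x0 \<eta> =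
     (SOME x. x \<in> X \<and> (\<forall>z\<in>X. prox_obj \<mu> w w' g x0 \<eta> x \<le> prox_obj \<mu> w w' g x0 \<eta> z))"

text \<open>State of (stochastic) RGEM after t iterations, for a realisation
  \<sigma> of the indices i_1,...,i_k (values in {1..m}) and a realisation s of the samples:
  (x^t, (\<lambda>i. underline x_i^t), (\<lambda>i. y_i^t), (\<lambda>i. y_i^{t-1})).
  If stoch is False, the update is y_i^t = grad f_i(underline x_i^t) (RGEM);
  if stoch is True, y_i^t = (1/B_t) sum_{j=1}^{B_t} G_i(underline x_i^t, xi^t_{i,j}) (stochastic RGEM),
  where \<xi> t i j s is the j-th fresh sample of component i at iteration t.\<close>
primrec rgem_state ::
  "'a::real_inner set \<Rightarrow> real \<Rightarrow> ('a \<Rightarrow> real) \<Rightarrow> ('a \<Rightarrow> 'a) \<Rightarrow> nat \<Rightarrow>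
   (nat \<Rightarrow> 'a \<Rightarrow> 'a) \<Rightarrow> bool \<Rightarrow> (nat \<Rightarrow> 'a \<Rightarrow> 'b \<Rightarrow> 'a) \<Rightarrow> (nat \<Rightarrow> nat) \<Rightarrow>
   (nat \<Rightarrow> nat \<Rightarrow> nat \<Rightarrow> 's \<Rightarrow> 'b) \<Rightarrow>
   (nat \<Rightarrow> real) \<Rightarrow> (nat \<Rightarrow> real) \<Rightarrow> (nat \<Rightarrow> real) \<Rightarrow> 'a \<Rightarrow>
   (nat \<Rightarrow> nat) \<Rightarrow> 's \<Rightarrow> nat \<Rightarrow> 'a \<times> (nat \<Rightarrow> 'a) \<times> (nat \<Rightarrow> 'a) \<times> (nat \<Rightarrow> 'a)" where
  "rgem_state X \<mu> w w' m grad stoch G B \<xi> \<alpha> \<eta> \<tau> x0 \<sigma> s 0 = (x0, (\<lambda>i. x0), (\<lambda>i. 0), (\<lambda>i. 0))"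
| "rgem_state X \<mu> w w' m grad stoch G B \<xi> \<alpha> \<eta> \<tau> x0 \<sigma> s (Suc t) =
    (case rgem_state X \<mu> w w' m grad stoch G B \<xi> \<alpha> \<eta> \<tau> x0 \<sigma> s t of (x, xl, y, yp) \<Rightarrow>
      let ytil = (\<lambda>i. y i + \<alpha> (Suc t) *\<^sub>R (y i - yp i));
          xn = prox_map X \<mu> w w' ((1 / real m) *\<^sub>R (\<Sum>i=1..m. ytil i)) x (\<eta> (Suc t));
          it = \<sigma> (Suc t);
          xln = xl(it := (1 / (1 + \<tau> (Suc t))) *\<^sub>R (xn + \<tau> (Suc t) *\<^sub>R xl it));
          yn = y(it := (if stoch
                        then (1 / real (B (Suc t))) *\<^sub>R (\<Sum>j=1..B (Suc t). G it (xln it) (\<xi> (Suc t) it j s))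
                        else grad it (xln it)))
      in (xn, xln, yn, y))"

text \<open>Expectation over all random variables of the algorithm: the indices
  i_1,...,i_k are uniform on {1..m} and independent of the samples (probability space S),
  so E[F] = integral over S of the average of F over all index sequences.\<close>
definition rgem_expect :: "'s measure \<Rightarrow> nat \<Rightarrow> nat \<Rightarrow> ((nat \<Rightarrow> nat) \<Rightarrow> 's \<Rightarrow> real) \<Rightarrow> real" where
  "rgem_expect S m k F = (\<integral>s. (\<Sum>\<sigma>\<in>{1..k} \<rightarrow>\<^sub>E {1..m}. F \<sigma> s) / real m ^ k \<partial>S)"

end

theory Submission
  imports Defs
begin

lemma sum_PiE_split:
  assumes "t \<in> A" "finite A" "finite B"
  shows "(\<Sum>\<sigma>\<in>A \<rightarrow>\<^sub>E B. H \<sigma>) = (\<Sum>g\<in>(A-{t}) \<rightarrow>\<^sub>E B. \<Sum>j\<in>B. H (g(t:=j)))"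
proof -
  have A: "A = insert t (A - {t})" using assms by auto
  have "(\<Sum>\<sigma>\<in>A \<rightarrow>\<^sub>E B. H \<sigma>) = (\<Sum>\<sigma>\<in>(\<lambda>(y, g). g(t := y)) ` (B \<times> ((A-{t}) \<rightarrow>\<^sub>E B)). H \<sigma>)"
    by (subst A, subst PiE_insert_eq) simp
  also have "\<dots> = (\<Sum>p\<in>B \<times> ((A-{t}) \<rightarrow>\<^sub>E B). H ((\<lambda>(y, g). g(t := y)) p))"
    by (rule sum.reindex_cong[OF inj_combinator]) auto
  also have "\<dots> = (\<Sum>j\<in>B. \<Sum>g\<in>(A-{t}) \<rightarrow>\<^sub>E B. H (g(t:=j)))"
    by (subst sum.cartesian_product) (simp add: case_prod_unfold)
  also have "\<dots> = (\<Sum>g\<in>(A-{t}) \<rightarrow>\<^sub>E B. \<Sum>j\<in>B. H (g(t:=j)))"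
    by (rule sum.swap)
  finally show ?thesis .
qed

lemma grad_ineq:
  fixes f :: "'a::real_inner \<Rightarrow> real"
  assumes cv: "convex_on X f" and z: "z \<in> X" and y: "y \<in> X"
    and d: "(f has_derivative (\<lambda>h. inner a h)) (at z within X)"
  shows "f z + inner a (y - z) \<le> f y"
proof -
  define p where "p = (\<lambda>u::real. (1 - u) *\<^sub>R z + u *\<^sub>R y)"
  have cX: "convex X" using cv convex_on_imp_convex by blast
  have pX: "p ` {0..1} \<subseteq> X"
    using convexD[OF cX z y] by (auto simp: p_def)
  have p0: "p 0 = z" by (simp add: p_def)
  have pd: "(p has_derivative (\<lambda>h. h *\<^sub>R (y - z))) (at 0 within {0..1})"
    unfolding p_def by (auto intro!: derivative_eq_intros simp: algebra_simps)
  have "((f \<circ> p) has_derivative (\<lambda>h. inner a (h *\<^sub>R (y - z)))) (at 0 within {0..1})"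
    using has_derivative_in_compose[OF pd has_derivative_subset[OF d[folded p0] pX]] by (simp add: o_def)
  hence "((f \<circ> p) has_field_derivative (inner a (y - z))) (at 0 within {0..1})"
    unfolding has_field_derivative_def
  proof -
    assume h: "((f \<circ> p) has_derivative (\<lambda>h. inner a (h *\<^sub>R (y - z)))) (at 0 within {0..1})"
    have eq: "(\<lambda>h. inner a (h *\<^sub>R (y - z))) = (*) (inner a (y - z))" by (auto simp: fun_eq_iff)
    show "((f \<circ> p) has_derivative (*) (inner a (y - z))) (at 0 within {0..1})" using h unfolding eq .
  qed
  hence lim: "((\<lambda>u. ((f \<circ> p) u - (f \<circ> p) 0) / (u - 0)) \<longlongrightarrow> inner a (y - z)) (at_right 0)"
    unfolding has_field_derivative_iff using at_within_Icc_at_right[of "0::real" 1] by simp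
  have ev: "eventually (\<lambda>u. ((f \<circ> p) u - (f \<circ> p) 0) / (u - 0) \<le> f y - f z) (at_right 0)"
    using eventually_at_right_real[of 0 "1::real"]
  proof (rule eventually_mono)
    fix u :: real assume u: "u \<in> {0<..<1}"
    have "f (p u) \<le> (1 - u) * f z + u * f y"
      using convex_onD[OF cv, of u z y] u z y by (simp add: p_def)
    thus "((f \<circ> p) u - (f \<circ> p) 0) / (u - 0) \<le> f y - f z"
      using u p0 by (simp add: field_simps)
  qed simp
  have "inner a (y - z) \<le> f y - f z"
    using tendsto_upperbound[OF lim ev] by simp
  thus ?thesis by simp
qed

lemma sum_if_eq:
  assumes "i \<in> {1..m::nat}"
  shows "(\<Sum>j\<in>{1..m}. if j = i then A else Bv) = A + (real m - 1) * (Bv::real)"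
proof -
  have "(\<Sum>j\<in>{1..m}. if j = i then A else Bv) = (\<Sum>j\<in>{1..m}. Bv + (if j = i then A - Bv else 0))"
    by (rule sum.cong) auto
  also have "\<dots> = real m * Bv + (A - Bv)" using assms by (simp add: sum.distrib)
  finally show ?thesis by (simp add: algebra_simps)
qed

context
  fixes X :: "'a::real_inner set" and \<mu> :: real and w :: "'a \<Rightarrow> real" and w' :: "'a \<Rightarrow> 'a"
    and m :: nat and grad :: "nat \<Rightarrow> 'a \<Rightarrow> 'a" and stoch :: bool
    and G :: "nat \<Rightarrow> 'a \<Rightarrow> 'b \<Rightarrow> 'a" and B :: "nat \<Rightarrow> nat"
    and \<xi> :: "nat \<Rightarrow> nat \<Rightarrow> nat \<Rightarrow> 's \<Rightarrow> 'b" and \<alpha> \<eta> \<tau> :: "nat \<Rightarrow> real" and x0 :: 'a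
begin

abbreviation "st \<equiv> rgem_state X \<mu> w w' m grad stoch G B \<xi> \<alpha> \<eta> \<tau> x0"

lemma st_agree: "(\<And>u. u \<le> t \<Longrightarrow> \<sigma> u = \<sigma>' u) \<Longrightarrow> st \<sigma> s t = st \<sigma>' s t"
proof (induction t)
  case 0 then show ?case by simp
next
  case (Suc t)
  have h1: "st \<sigma> s t = st \<sigma>' s t" using Suc by auto
  have h2: "\<sigma> (Suc t) = \<sigma>' (Suc t)" using Suc by auto
  show ?case by (simp only: rgem_state.simps(2) h1 h2)
qed

lemma st_upd:
  "fst (st (\<sigma>(Suc t := j)) s (Suc t)) = fst (st \<sigma> s (Suc t)) \<and>
   fst (snd (st (\<sigma>(Suc t := j)) s (Suc t))) = (fst (snd (st \<sigma> s t)))(j :=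
      (1 / (1 + \<tau> (Suc t))) *\<^sub>R (fst (st \<sigma> s (Suc t)) + \<tau> (Suc t) *\<^sub>R fst (snd (st \<sigma> s t)) j))"
proof -
  have e: "st (\<sigma>(Suc t := j)) s t = st \<sigma> s t" by (rule st_agree) auto
  obtain a b c d where abcd: "st \<sigma> s t = (a, b, c, d)" by (cases "st \<sigma> s t") auto
  show ?thesis using e abcd by (simp add: Let_def del: rgem_state.simps(2) add: rgem_state.simps(2)[of _ _ _ _ _ _ _ _ _ _ _ _ _ _ _ _ t])
qed

lemma st_in_X:
  assumes cX: "convex X" and x0: "x0 \<in> X"
    and prox_wd: "\<And>t g z0. t \<in> {1..k} \<Longrightarrow> z0 \<in> X \<Longrightarrow>
                    \<exists>z\<in>X. \<forall>u\<in>X. prox_obj \<mu> w w' g z0 (\<eta> t) z \<le> prox_obj \<mu> w w' g z0 (\<eta> t) u"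
    and tau: "\<And>t. t \<in> {1..k} \<Longrightarrow> \<tau> t \<ge> 0"
  shows "t \<le> k \<Longrightarrow> fst (st \<sigma> s t) \<in> X \<and> (\<forall>i. fst (snd (st \<sigma> s t)) i \<in> X)"
proof (induction t)
  case 0 then show ?case using x0 by simp
next
  case (Suc t)
  obtain a b c d where abcd: "st \<sigma> s t = (a, b, c, d)" by (cases "st \<sigma> s t") auto
  have aX: "a \<in> X" and bX: "\<And>i. b i \<in> X" using Suc abcd by auto
  define g where "g = (1 / real m) *\<^sub>R (\<Sum>i = 1..m. c i + \<alpha> (Suc t) *\<^sub>R (c i - d i))"
  have pm: "prox_map X \<mu> w w' g a (\<eta> (Suc t)) \<in> X"
  proof -
    have ex: "\<exists>z. z \<in> X \<and> (\<forall>u\<in>X. prox_obj \<mu> w w' g a (\<eta> (Suc t)) z \<le> prox_obj \<mu> w w' g a (\<eta> (Suc t)) u)"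
      using prox_wd[of "Suc t" a g] Suc.prems aX by auto
    show ?thesis unfolding prox_map_def using someI_ex[OF ex] by blast
  qed
  have fst_eq: "fst (st \<sigma> s (Suc t)) = prox_map X \<mu> w w' g a (\<eta> (Suc t))"
    using abcd by (simp add: Let_def g_def del: rgem_state.simps(2) add: rgem_state.simps(2)[of _ _ _ _ _ _ _ _ _ _ _ _ _ _ _ _ t])
  have tn: "\<tau> (Suc t) \<ge> 0" using tau Suc.prems by auto
  have cc: "\<And>i. (1 / (1 + \<tau> (Suc t))) *\<^sub>R (prox_map X \<mu> w w' g a (\<eta> (Suc t)) + \<tau> (Suc t) *\<^sub>R b i) \<in> X"
  proof -
    fix i
    have "(1 / (1 + \<tau> (Suc t))) *\<^sub>R (prox_map X \<mu> w w' g a (\<eta> (Suc t)) + \<tau> (Suc t) *\<^sub>R b i)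
       = (1 - \<tau> (Suc t) / (1 + \<tau> (Suc t))) *\<^sub>R prox_map X \<mu> w w' g a (\<eta> (Suc t)) + (\<tau> (Suc t) / (1 + \<tau> (Suc t))) *\<^sub>R b i"
      using tn by (simp add: scaleR_add_right field_simps)
    moreover have "\<tau> (Suc t) / (1 + \<tau> (Suc t)) \<ge> 0" "\<tau> (Suc t) / (1 + \<tau> (Suc t)) \<le> 1" using tn by auto
    ultimately show "?thesis i" using convexD_alt[OF cX pm bX[of i]] by simp
  qed
  have h2: "fst (snd (st \<sigma> s (Suc t))) = b(\<sigma> (Suc t) := (1 / (1 + \<tau> (Suc t))) *\<^sub>R (prox_map X \<mu> w w' g a (\<eta> (Suc t)) + \<tau> (Suc t) *\<^sub>R b (\<sigma> (Suc t))))"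
    (is "_ = ?bb")
    using abcd by (simp add: Let_def g_def del: rgem_state.simps(2) add: rgem_state.simps(2)[of _ _ _ _ _ _ _ _ _ _ _ _ _ _ _ _ t])
  have hb: "\<forall>i. ?bb i \<in> X" using cc bX by simp
  show ?case unfolding fst_eq h2 using pm hb by blast
qed

lemma xl_rec:
  assumes t: "t \<in> {1..k}" and i: "i \<in> {1..m}" and tau: "\<tau> t \<ge> 0"
  shows "real m * (1 + \<tau> t) * (\<Sum>\<sigma>\<in>{1..k}\<rightarrow>\<^sub>E{1..m}. inner a (fst (snd (st \<sigma> s t)) i))
       = (\<Sum>\<sigma>\<in>{1..k}\<rightarrow>\<^sub>E{1..m}. inner a (fst (st \<sigma> s t)))
         + (real m * (1 + \<tau> t) - 1) * (\<Sum>\<sigma>\<in>{1..k}\<rightarrow>\<^sub>E{1..m}. inner a (fst (snd (st \<sigma> s (t - 1))) i))"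
    (is "_ = ?rhs")
proof -
  obtain t' where t': "t = Suc t'" using t by (cases t) auto
  let ?P = "({1..k} - {t}) \<rightarrow>\<^sub>E {1..m}"
  have sp: "\<And>H. (\<Sum>\<sigma>\<in>{1..k}\<rightarrow>\<^sub>E{1..m}. H \<sigma>) = (\<Sum>g\<in>?P. \<Sum>j\<in>{1..m}. H (g(t:=j)))"
    by (rule sum_PiE_split) (use t in auto)
  have per: "real m * (1 + \<tau> t) * (\<Sum>j\<in>{1..m}. inner a (fst (snd (st (g(t:=j)) s t)) i))
      = (\<Sum>j\<in>{1..m}. inner a (fst (st (g(t:=j)) s t)))
        + (real m * (1 + \<tau> t) - 1) * (\<Sum>j\<in>{1..m}. inner a (fst (snd (st (g(t:=j)) s (t - 1))) i))" for g
  proof -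
    define xg where "xg = fst (st g s t)"
    define b where "b = inner a (fst (snd (st g s t')) i)"
    have e1: "fst (st (g(t:=j)) s t) = xg" for j using st_upd[of g t' j s] t' xg_def by (simp del: rgem_state.simps)
    have e2: "fst (snd (st (g(t:=j)) s (t - 1))) i = fst (snd (st g s t')) i" for j
    proof -
      have "st (g(t:=j)) s t' = st g s t'" by (rule st_agree) (use t' in auto)
      thus ?thesis using t' by (simp del: rgem_state.simps)
    qed
    have e3: "inner a (fst (snd (st (g(t:=j)) s t)) i) =
        (if j = i then (inner a xg + \<tau> t * b) / (1 + \<tau> t) else b)" for j
      using st_upd[of g t' j s] t' xg_def b_def by (simp add: inner_add_right divide_inverse del: rgem_state.simps)
    have e2s: "(\<Sum>j\<in>{1..m}. inner a (fst (snd (st (g(t:=j)) s (t - 1))) i)) = real m * b"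
      by (simp only: e2 b_def) (simp del: rgem_state.simps)
    have e1s: "(\<Sum>j\<in>{1..m}. inner a (fst (st (g(t:=j)) s t))) = real m * inner a xg"
      by (simp only: e1) (simp del: rgem_state.simps)
    have "real m * (1 + \<tau> t) * (\<Sum>j\<in>{1..m}. inner a (fst (snd (st (g(t:=j)) s t)) i))
        = real m * (1 + \<tau> t) * ((inner a xg + \<tau> t * b) / (1 + \<tau> t) + (real m - 1) * b)"
      by (simp only: e3 sum_if_eq[OF i])
    also have "\<dots> = real m * inner a xg + (real m * (1 + \<tau> t) - 1) * (real m * b)"
      using tau by (simp add: field_simps)
    also have "\<dots> = (\<Sum>j\<in>{1..m}. inner a (fst (st (g(t:=j)) s t)))
        + (real m * (1 + \<tau> t) - 1) * (\<Sum>j\<in>{1..m}. inner a (fst (snd (st (g(t:=j)) s (t - 1))) i))"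
      by (simp only: e1s e2s)
    finally show ?thesis .
  qed
  have "real m * (1 + \<tau> t) * (\<Sum>\<sigma>\<in>{1..k}\<rightarrow>\<^sub>E{1..m}. inner a (fst (snd (st \<sigma> s t)) i))
     = (\<Sum>g\<in>?P. real m * (1 + \<tau> t) * (\<Sum>j\<in>{1..m}. inner a (fst (snd (st (g(t:=j)) s t)) i)))"
    by (simp only: sp sum_distrib_left[of _ _ ?P])
  also have "\<dots> = (\<Sum>g\<in>?P. (\<Sum>j\<in>{1..m}. inner a (fst (st (g(t:=j)) s t)))
        + (real m * (1 + \<tau> t) - 1) * (\<Sum>j\<in>{1..m}. inner a (fst (snd (st (g(t:=j)) s (t - 1))) i)))"
    by (simp only: per)
  also have "\<dots> = ?rhs"
    by (simp only: sp sum.distrib sum_distrib_left[of _ _ ?P])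
  finally show ?thesis .
qed

end

theorem lemma4p2:
  fixes X :: "'a::euclidean_space set"
    and m k :: nat
    and f :: "nat \<Rightarrow> 'a \<Rightarrow> real" and grad :: "nat \<Rightarrow> 'a \<Rightarrow> 'a"
    and \<mu> :: real and w :: "'a \<Rightarrow> real" and w' :: "'a \<Rightarrow> 'a"
    and stoch :: bool
    and S :: "'s measure" and D :: "nat \<Rightarrow> 'b measure"
    and \<xi> :: "nat \<Rightarrow> nat \<Rightarrow> nat \<Rightarrow> 's \<Rightarrow> 'b" and G :: "nat \<Rightarrow> 'a \<Rightarrow> 'b \<Rightarrow> 'a"
    and B :: "nat \<Rightarrow> nat"
    and \<alpha> \<eta> \<tau> \<theta> :: "nat \<Rightarrow> real"
    and x0 x :: "'a"
    and xs :: "(nat \<Rightarrow> nat) \<Rightarrow> 's \<Rightarrow> nat \<Rightarrow> 'a"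
    and xl :: "(nat \<Rightarrow> nat) \<Rightarrow> 's \<Rightarrow> nat \<Rightarrow> nat \<Rightarrow> 'a"
  defines "xs \<equiv> (\<lambda>\<sigma> s t. fst (rgem_state X \<mu> w w' m grad stoch G B \<xi> \<alpha> \<eta> \<tau> x0 \<sigma> s t))"
    and "xl \<equiv> (\<lambda>\<sigma> s t. fst (snd (rgem_state X \<mu> w w' m grad stoch G B \<xi> \<alpha> \<eta> \<tau> x0 \<sigma> s t)))"
  assumes X: "closed X" "convex X"
    and m: "m \<ge> 1" and k: "k \<ge> 1"
    and f_convex: "\<And>i. i \<in> {1..m} \<Longrightarrow> convex_on X (f i)"
    and f_grad: "\<And>i z. i \<in> {1..m} \<Longrightarrow> z \<in> X \<Longrightarrow>
                   (f i has_derivative (\<lambda>h. inner (grad i z) h)) (at z within X)"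
    and \<mu>: "\<mu> \<ge> 0"
    and w_sc: "strongly_convex_mod X w 1"
    and w'_sub: "\<And>z y. z \<in> X \<Longrightarrow> y \<in> X \<Longrightarrow> w y \<ge> w z + inner (w' z) (y - z)"
    and prox_wd: "\<And>t g z0. t \<in> {1..k} \<Longrightarrow> z0 \<in> X \<Longrightarrow>
                    \<exists>z\<in>X. \<forall>u\<in>X. prox_obj \<mu> w w' g z0 (\<eta> t) z \<le> prox_obj \<mu> w w' g z0 (\<eta> t) u"
    and S: "prob_space S"
    and samples_indep: "prob_space.indep_vars S (\<lambda>(t, i, j). D i) (\<lambda>(t, i, j). \<xi> t i j)
                          {(t, i, j). t \<in> {1..k} \<and> i \<in> {1..m} \<and> j \<in> {1..B t}}"
    and samples_distr: "\<And>t i j. t \<in> {1..k} \<Longrightarrow> i \<in> {1..m} \<Longrightarrow> j \<in> {1..B t} \<Longrightarrow>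
                          distr S (D i) (\<xi> t i j) = D i"
    and G_unbiased: "\<And>i z. i \<in> {1..m} \<Longrightarrow> z \<in> X \<Longrightarrow>
                   integrable (D i) (G i z) \<and> (\<integral>\<zeta>. G i z \<zeta> \<partial>D i) = grad i z"
    and B: "\<And>t. t \<in> {1..k} \<Longrightarrow> B t \<ge> 1"
    and params: "\<And>t. t \<in> {1..k} \<Longrightarrow> \<alpha> t \<ge> 0 \<and> \<eta> t \<ge> 0 \<and> \<tau> t \<ge> 0"
    and x0: "x0 \<in> X" and x: "x \<in> X"
    and \<theta>_nonneg: "\<And>t. t \<in> {1..k} \<Longrightarrow> \<theta> t \<ge> 0"
    and \<theta>_rel: "\<And>t. t \<in> {2..k} \<Longrightarrow>
                  \<theta> t * (real m * (1 + \<tau> t) - 1) = \<theta> (t - 1) * real m * (1 + \<tau> (t - 1))"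
    and int_x: "\<And>\<sigma> t. \<sigma> \<in> {1..k} \<rightarrow>\<^sub>E {1..m} \<Longrightarrow> t \<in> {1..k} \<Longrightarrow>
                  integrable S (\<lambda>s. inner ((1 / real m) *\<^sub>R (\<Sum>i=1..m. grad i x)) (xs \<sigma> s t))"
    and int_w: "\<And>\<sigma> t. \<sigma> \<in> {1..k} \<rightarrow>\<^sub>E {1..m} \<Longrightarrow> t \<in> {1..k} \<Longrightarrow>
                  integrable S (\<lambda>s. w (xs \<sigma> s t))"
    and int_f: "\<And>\<sigma> i. \<sigma> \<in> {1..k} \<rightarrow>\<^sub>E {1..m} \<Longrightarrow> i \<in> {1..m} \<Longrightarrow>
                  integrable S (\<lambda>s. f i (xl \<sigma> s k i))"
  shows
    "(\<Sum>t=1..k. \<theta> t * rgem_expect S m k (\<lambda>\<sigma> s.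
         inner ((1 / real m) *\<^sub>R (\<Sum>i=1..m. grad i x)) (xs \<sigma> s t - x) + \<mu> * w (xs \<sigma> s t) - \<mu> * w x))
     \<le> \<theta> k * (1 + \<tau> k) * (\<Sum>i=1..m. rgem_expect S m k (\<lambda>\<sigma> s. f i (xl \<sigma> s k i)))
       + (\<Sum>t=1..k. \<theta> t * rgem_expect S m k (\<lambda>\<sigma> s.
            \<mu> * w (xs \<sigma> s t) - ((1 / real m) * (\<Sum>i=1..m. f i x) + \<mu> * w x)))
       - \<theta> 1 * (real m * (1 + \<tau> 1) - 1) *
           (inner (x0 - x) ((1 / real m) *\<^sub>R (\<Sum>i=1..m. grad i x)) + (1 / real m) * (\<Sum>i=1..m. f i x))"
proof -
  interpret S: prob_space S by (rule S)
  define PS where "PS = {1..k} \<rightarrow>\<^sub>E {1..m}"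
  define N where "N = real m ^ k"
  define gg where "gg = (1 / real m) *\<^sub>R (\<Sum>i=1..m. grad i x)"
  define F where "F = (1 / real m) * (\<Sum>i=1..m. f i x)"
  define c where "c = \<theta> 1 * (real m * (1 + \<tau> 1) - 1)"
  define T where "T = \<theta> k * (1 + \<tau> k)"
  have mpos: "real m > 0" using m by simp
  have Npos: "N > 0" unfolding N_def using mpos by simp
  have cardPS: "real (card PS) = N" unfolding PS_def N_def by (simp add: card_funcsetE)
  have finPS: "finite PS" by (simp add: PS_def finite_PiE)
  have tau: "\<And>t. t \<in> {1..k} \<Longrightarrow> \<tau> t \<ge> 0" using params by blast
  have T0: "T \<ge> 0" unfolding T_def using \<theta>_nonneg[of k] tau[of k] k by simp
  have inX: "xs \<sigma> s t \<in> X \<and> xl \<sigma> s t i \<in> X" if tk: "t \<le> k" for \<sigma> s t i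
  proof -
    have "fst (rgem_state X \<mu> w w' m grad stoch G B \<xi> \<alpha> \<eta> \<tau> x0 \<sigma> s t) \<in> X \<and>
          (\<forall>i. fst (snd (rgem_state X \<mu> w w' m grad stoch G B \<xi> \<alpha> \<eta> \<tau> x0 \<sigma> s t)) i \<in> X)"
      apply (rule st_in_X[where k=k])
          apply (rule X(2))
         apply (rule x0)
        apply (fact prox_wd)
       apply (fact tau)
      apply (rule tk)
      done
    thus ?thesis unfolding xs_def xl_def by blast
  qed
  have mg: "\<And>y. real m * inner gg y = (\<Sum>i=1..m. inner (grad i x) y)"
    unfolding gg_def using mpos by (simp add: inner_sum_left)
  have telA: "1 \<le> n \<longrightarrow> n \<le> k \<longrightarrow> \<theta> n * (real m * (1 + \<tau> n)) = (\<Sum>t=1..n. \<theta> t) + c" for n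
  proof (induction n)
    case 0 show ?case by simp
  next
    case (Suc n)
    show ?case
    proof (cases "n = 0")
      case True then show ?thesis by (simp add: c_def algebra_simps)
    next
      case False
      show ?thesis
      proof (intro impI)
        assume "Suc n \<le> k"
        hence IH: "\<theta> n * (real m * (1 + \<tau> n)) = (\<Sum>t=1..n. \<theta> t) + c" using Suc False by simp
        have "\<theta> (Suc n) * (real m * (1 + \<tau> (Suc n)) - 1) = \<theta> n * real m * (1 + \<tau> n)"
          using \<theta>_rel[of "Suc n"] \<open>Suc n \<le> k\<close> False by simp
        thus "\<theta> (Suc n) * (real m * (1 + \<tau> (Suc n))) = (\<Sum>t=1..Suc n. \<theta> t) + c"
          using IH by (simp add: algebra_simps)
      qed
    qed
  qed
  define Lf where "Lf t s = (\<Sum>\<sigma>\<in>{1..k} \<rightarrow>\<^sub>E {1..m}. inner gg (xs \<sigma> s t - x) + \<mu> * w (xs \<sigma> s t) - \<mu> * w x) / real m ^ k" for t s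
  define Rf where "Rf t s = (\<Sum>\<sigma>\<in>{1..k} \<rightarrow>\<^sub>E {1..m}. \<mu> * w (xs \<sigma> s t) - (F + \<mu> * w x)) / real m ^ k" for t s
  define Ff where "Ff i s = (\<Sum>\<sigma>\<in>{1..k} \<rightarrow>\<^sub>E {1..m}. f i (xl \<sigma> s k i)) / real m ^ k" for i s
  have pw: "(\<Sum>t=1..k. \<theta> t * Lf t s) - (\<Sum>t=1..k. \<theta> t * Rf t s) - T * (\<Sum>i=1..m. Ff i s)
            \<le> - (c * (inner (x0 - x) gg + F))" for s
  proof -
    define V where "V n = (\<Sum>\<sigma>\<in>PS. \<Sum>i=1..m. inner (grad i x) (xl \<sigma> s n i))" for n
    define W where "W n = (\<Sum>\<sigma>\<in>PS. inner gg (xs \<sigma> s n))" for n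
    define Sf where "Sf = (\<Sum>\<sigma>\<in>PS. \<Sum>i=1..m. f i (xl \<sigma> s k i))"
    define gx where "gx = inner gg x"
    define gx0 where "gx0 = inner gg x0"
    have Vswap: "V n = (\<Sum>i=1..m. \<Sum>\<sigma>\<in>PS. inner (grad i x) (xl \<sigma> s n i))" for n
      unfolding V_def by (rule sum.swap)
    have Wswap: "real m * W n = (\<Sum>i=1..m. \<Sum>\<sigma>\<in>PS. inner (grad i x) (xs \<sigma> s n))" for n
    proof -
      have "real m * W n = (\<Sum>\<sigma>\<in>PS. \<Sum>i=1..m. inner (grad i x) (xs \<sigma> s n))"
        unfolding W_def sum_distrib_left mg ..
      also have "\<dots> = (\<Sum>i=1..m. \<Sum>\<sigma>\<in>PS. inner (grad i x) (xs \<sigma> s n))" by (rule sum.swap)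
      finally show ?thesis .
    qed
    have recV: "real m * (1 + \<tau> n) * V n = real m * W n + (real m * (1 + \<tau> n) - 1) * V (n - 1)"
      if n: "n \<in> {1..k}" for n
    proof -
      have r: "real m * (1 + \<tau> n) * (\<Sum>\<sigma>\<in>PS. inner (grad i x) (xl \<sigma> s n i))
         = (\<Sum>\<sigma>\<in>PS. inner (grad i x) (xs \<sigma> s n))
           + (real m * (1 + \<tau> n) - 1) * (\<Sum>\<sigma>\<in>PS. inner (grad i x) (xl \<sigma> s (n - 1) i))"
        if i: "i \<in> {1..m}" for i
        unfolding PS_def xs_def xl_def by (rule xl_rec) (use n i tau in auto)
      have "real m * (1 + \<tau> n) * V n = (\<Sum>i=1..m. real m * (1 + \<tau> n) * (\<Sum>\<sigma>\<in>PS. inner (grad i x) (xl \<sigma> s n i)))"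
        unfolding Vswap sum_distrib_left ..
      also have "\<dots> = (\<Sum>i=1..m. (\<Sum>\<sigma>\<in>PS. inner (grad i x) (xs \<sigma> s n))
           + (real m * (1 + \<tau> n) - 1) * (\<Sum>\<sigma>\<in>PS. inner (grad i x) (xl \<sigma> s (n - 1) i)))"
        by (rule sum.cong) (simp_all only: r)
      also have "\<dots> = real m * W n + (real m * (1 + \<tau> n) - 1) * V (n - 1)"
        unfolding sum.distrib Wswap Vswap sum_distrib_left ..
      finally show ?thesis .
    qed
    have telV: "1 \<le> n \<longrightarrow> n \<le> k \<longrightarrow> \<theta> n * (real m * (1 + \<tau> n)) * V n = real m * (\<Sum>t=1..n. \<theta> t * W t) + c * V 0" for n
    proof (induction n)
      case 0 show ?case by simp
    next
      case (Suc n)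
      show ?case
      proof (intro impI)
        assume sk: "Suc n \<le> k"
        have rv: "real m * (1 + \<tau> (Suc n)) * V (Suc n) = real m * W (Suc n) + (real m * (1 + \<tau> (Suc n)) - 1) * V n"
          using recV[of "Suc n"] sk by simp
        show "\<theta> (Suc n) * (real m * (1 + \<tau> (Suc n))) * V (Suc n) = real m * (\<Sum>t=1..Suc n. \<theta> t * W t) + c * V 0"
        proof (cases "n = 0")
          case True
          have "\<theta> 1 * (real m * (1 + \<tau> 1)) * V 1 = \<theta> 1 * (real m * W 1 + (real m * (1 + \<tau> 1) - 1) * V 0)"
            using rv True by (simp add: mult.assoc)
          then show ?thesis using True by (simp add: c_def algebra_simps)
        next
          case False
          hence IH: "\<theta> n * (real m * (1 + \<tau> n)) * V n = real m * (\<Sum>t=1..n. \<theta> t * W t) + c * V 0"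
            using Suc sk by simp
          have th: "\<theta> (Suc n) * (real m * (1 + \<tau> (Suc n)) - 1) = \<theta> n * real m * (1 + \<tau> n)"
            using \<theta>_rel[of "Suc n"] sk False by simp
          have "\<theta> (Suc n) * (real m * (1 + \<tau> (Suc n))) * V (Suc n)
              = \<theta> (Suc n) * (real m * W (Suc n)) + (\<theta> (Suc n) * (real m * (1 + \<tau> (Suc n)) - 1)) * V n"
            using arg_cong[OF rv, of "\<lambda>z. \<theta> (Suc n) * z"] by (simp add: algebra_simps)
          also have "\<dots> = \<theta> (Suc n) * (real m * W (Suc n)) + \<theta> n * (real m * (1 + \<tau> n)) * V n"
            unfolding th by (simp add: mult.assoc)
          also have "\<dots> = real m * (\<Sum>t=1..Suc n. \<theta> t * W t) + c * V 0"
            unfolding IH by (simp add: algebra_simps)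
          finally show ?thesis .
        qed
      qed
    qed
    have V0: "V 0 = N * (real m * gx0)"
    proof -
      have "V 0 = (\<Sum>\<sigma>\<in>PS. \<Sum>i=1..m. inner (grad i x) x0)"
        unfolding V_def xl_def by simp
      also have "\<dots> = N * (real m * gx0)"
        unfolding gx0_def mg using cardPS by simp
      finally show ?thesis .
    qed
    have conv: "Sf \<ge> N * (real m * (F - gx)) + V k"
    proof -
      have "(\<Sum>i=1..m. f i x + inner (grad i x) (xl \<sigma> s k i - x)) \<le> (\<Sum>i=1..m. f i (xl \<sigma> s k i))" for \<sigma>
        by (rule sum_mono, rule grad_ineq[OF f_convex _ _ f_grad]) (use x inX in auto)
      hence "(\<Sum>\<sigma>\<in>PS. \<Sum>i=1..m. f i x + inner (grad i x) (xl \<sigma> s k i - x)) \<le> Sf"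
        unfolding Sf_def by (rule sum_mono)
      moreover have e: "(\<Sum>i=1..m. f i x + inner (grad i x) (xl \<sigma> s k i - x))
          = real m * (F - gx) + (\<Sum>i=1..m. inner (grad i x) (xl \<sigma> s k i))" for \<sigma>
      proof -
        have "real m * F = (\<Sum>i=1..m. f i x)" unfolding F_def using mpos by simp
        moreover have "real m * gx = (\<Sum>i=1..m. inner (grad i x) x)" unfolding gx_def mg ..
        ultimately show ?thesis by (simp add: sum.distrib inner_diff_right sum_subtractf algebra_simps)
      qed
      moreover have "(\<Sum>\<sigma>\<in>PS. \<Sum>i=1..m. f i x + inner (grad i x) (xl \<sigma> s k i - x))
          = (\<Sum>\<sigma>\<in>PS. real m * (F - gx) + (\<Sum>i=1..m. inner (grad i x) (xl \<sigma> s k i)))"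
        by (rule sum.cong) (simp_all only: e)
      moreover have "(\<Sum>\<sigma>\<in>PS. real m * (F - gx) + (\<Sum>i=1..m. inner (grad i x) (xl \<sigma> s k i)))
          = N * (real m * (F - gx)) + V k"
        unfolding sum.distrib V_def using cardPS by simp
      ultimately show ?thesis by linarith
    qed
    have LR: "Lf t s - Rf t s = (W t - N * gx + N * F) / N" for t
    proof -
      have "Lf t s - Rf t s = (\<Sum>\<sigma>\<in>PS. (inner gg (xs \<sigma> s t - x) + \<mu> * w (xs \<sigma> s t) - \<mu> * w x)
                 - (\<mu> * w (xs \<sigma> s t) - (F + \<mu> * w x))) / N"
        unfolding Lf_def Rf_def PS_def[symmetric] N_def[symmetric] diff_divide_distrib[symmetric] sum_subtractf[symmetric] ..
      also have "\<dots> = (\<Sum>\<sigma>\<in>PS. inner gg (xs \<sigma> s t) + (F - gx)) / N"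
        by (simp add: inner_diff_right gx_def algebra_simps)
      also have "\<dots> = (W t - N * gx + N * F) / N"
        unfolding W_def sum.distrib using cardPS by (simp add: algebra_simps)
      finally show ?thesis .
    qed
    have Fsum: "(\<Sum>i=1..m. Ff i s) = Sf / N"
    proof -
      have "(\<Sum>i=1..m. Ff i s) = (\<Sum>i=1..m. \<Sum>\<sigma>\<in>PS. f i (xl \<sigma> s k i)) / N"
        unfolding Ff_def PS_def[symmetric] N_def[symmetric] sum_divide_distrib ..
      also have "\<dots> = Sf / N" unfolding Sf_def by (subst sum.swap) (rule refl)
      finally show ?thesis .
    qed
    define \<Theta> where "\<Theta> = (\<Sum>t=1..k. \<theta> t)"
    define \<Omega> where "\<Omega> = (\<Sum>t=1..k. \<theta> t * W t)"
    have h2: "real m * T = \<Theta> + c" using telA[of k] k unfolding T_def \<Theta>_def by (simp add: algebra_simps)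
    have h3: "T * V k = \<Omega> + c * N * gx0"
    proof -
      have "real m * (T * V k) = real m * (\<Omega> + c * N * gx0)"
        using telV[of k] k V0 unfolding T_def \<Omega>_def by (simp add: algebra_simps)
      thus ?thesis using mpos by simp
    qed
    have h1: "T * Sf \<ge> T * (N * (real m * (F - gx))) + T * V k"
      using mult_left_mono[OF conv T0] by (simp add: algebra_simps)
    have h4: "T * (N * (real m * (F - gx))) = N * (F - gx) * (\<Theta> + c)"
    proof -
      have "T * (N * (real m * (F - gx))) = N * (F - gx) * (real m * T)" by (simp add: algebra_simps)
      also have "\<dots> = N * (F - gx) * (\<Theta> + c)" unfolding h2 ..
      finally show ?thesis .
    qed
    have h5: "T * Sf / N \<ge> (F - gx) * \<Theta> + (F - gx) * c + \<Omega> / N + c * gx0"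
    proof -
      have "T * Sf \<ge> N * ((F - gx) * \<Theta> + (F - gx) * c + \<Omega> / N + c * gx0)"
        using h1 h3 h4 Npos by (simp add: algebra_simps)
      thus ?thesis using Npos by (simp add: field_simps)
    qed
    have lhs: "(\<Sum>t=1..k. \<theta> t * Lf t s) - (\<Sum>t=1..k. \<theta> t * Rf t s) = \<Omega> / N + (F - gx) * \<Theta>"
    proof -
      have "(\<Sum>t=1..k. \<theta> t * Lf t s) - (\<Sum>t=1..k. \<theta> t * Rf t s) = (\<Sum>t=1..k. \<theta> t * (Lf t s - Rf t s))"
        by (simp add: sum_subtractf right_diff_distrib)
      also have "\<dots> = (\<Sum>t=1..k. \<theta> t * W t / N + (F - gx) * \<theta> t)"
        unfolding LR using Npos by (intro sum.cong) (auto simp: field_simps)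
      also have "\<dots> = \<Omega> / N + (F - gx) * \<Theta>"
        unfolding \<Omega>_def \<Theta>_def by (simp add: sum.distrib sum_divide_distrib sum_distrib_left)
      finally show ?thesis .
    qed
    have ix: "inner (x0 - x) gg = gx0 - gx" unfolding gx0_def gx_def by (simp add: inner_diff_left inner_diff_right inner_commute)
    show ?thesis unfolding lhs Fsum ix using h5 by (simp add: algebra_simps)
  qed
  have intL: "integrable S (Lf t)" if t: "t \<in> {1..k}" for t
    unfolding Lf_def
  proof (intro integrable_divide_zero Bochner_Integration.integrable_sum)
    fix \<sigma> assume \<sigma>: "\<sigma> \<in> {1..k} \<rightarrow>\<^sub>E {1..m}"
    have "integrable S (\<lambda>s. inner gg (xs \<sigma> s t) - inner gg x + \<mu> * w (xs \<sigma> s t) - \<mu> * w x)"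
      using int_x[OF \<sigma> t] int_w[OF \<sigma> t] unfolding gg_def[symmetric]
      by (intro Bochner_Integration.integrable_diff Bochner_Integration.integrable_add integrable_mult_right S.integrable_const) auto
    thus "integrable S (\<lambda>s. inner gg (xs \<sigma> s t - x) + \<mu> * w (xs \<sigma> s t) - \<mu> * w x)"
      by (simp add: inner_diff_right)
  qed
  have intR: "integrable S (Rf t)" if t: "t \<in> {1..k}" for t
    unfolding Rf_def
  proof (intro integrable_divide_zero Bochner_Integration.integrable_sum)
    fix \<sigma> assume \<sigma>: "\<sigma> \<in> {1..k} \<rightarrow>\<^sub>E {1..m}"
    show "integrable S (\<lambda>s. \<mu> * w (xs \<sigma> s t) - (F + \<mu> * w x))"
      using int_w[OF \<sigma> t]
      by (intro Bochner_Integration.integrable_diff integrable_mult_right S.integrable_const) auto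
  qed
  have intF: "integrable S (Ff i)" if i: "i \<in> {1..m}" for i
    unfolding Ff_def
    by (intro integrable_divide_zero Bochner_Integration.integrable_sum) (use int_f i in auto)
  have fin: "(\<Sum>t=1..k. \<theta> t * integral\<^sup>L S (Lf t)) \<le> T * (\<Sum>i=1..m. integral\<^sup>L S (Ff i))
      + (\<Sum>t=1..k. \<theta> t * integral\<^sup>L S (Rf t)) - c * (inner (x0 - x) gg + F)"
  proof -
    define A where "A s = (\<Sum>t=1..k. \<theta> t * Lf t s)" for s
    define Bf where "Bf s = (\<Sum>t=1..k. \<theta> t * Rf t s)" for s
    define Cf where "Cf s = T * (\<Sum>i=1..m. Ff i s)" for s
    have iA: "integrable S A" unfolding A_def by (intro Bochner_Integration.integrable_sum integrable_mult_right) (auto intro: intL)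
    have iB: "integrable S Bf" unfolding Bf_def by (intro Bochner_Integration.integrable_sum integrable_mult_right) (auto intro: intR)
    have iC: "integrable S Cf" unfolding Cf_def by (intro Bochner_Integration.integrable_sum integrable_mult_right) (auto intro: intF)
    have eA: "integral\<^sup>L S A = (\<Sum>t=1..k. \<theta> t * integral\<^sup>L S (Lf t))"
      unfolding A_def by (subst Bochner_Integration.integral_sum) (auto intro: intL)
    have eB: "integral\<^sup>L S Bf = (\<Sum>t=1..k. \<theta> t * integral\<^sup>L S (Rf t))"
      unfolding Bf_def by (subst Bochner_Integration.integral_sum) (auto intro: intR)
    have eC: "integral\<^sup>L S Cf = T * (\<Sum>i=1..m. integral\<^sup>L S (Ff i))"
      unfolding Cf_def by (subst integral_mult_right_zero, subst Bochner_Integration.integral_sum) (auto intro: intF)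
    have "integral\<^sup>L S (\<lambda>s. A s - Bf s - Cf s) \<le> integral\<^sup>L S (\<lambda>s. - (c * (inner (x0 - x) gg + F)))"
      using iA iB iC pw unfolding A_def[symmetric] Bf_def[symmetric] Cf_def[symmetric]
      by (intro Bochner_Integration.integral_mono) auto
    also have "\<dots> = - (c * (inner (x0 - x) gg + F))" by (simp add: S.prob_space)
    finally have "integral\<^sup>L S A - integral\<^sup>L S Bf - integral\<^sup>L S Cf \<le> - (c * (inner (x0 - x) gg + F))"
      using iA iB iC by (simp add: Bochner_Integration.integral_diff)
    thus ?thesis unfolding eA eB eC by linarith
  qed
  show ?thesis using fin unfolding rgem_expect_def Lf_def Rf_def Ff_def gg_def F_def c_def T_def .
qed

end
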